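(* Let $p$ be an odd prime and $m$ a positive integer not divisible by $p$. Then for every $r\in\mathbb Z$, $$\sum_{\substack{k=1\\ k\equiv r\ (\mathrm{mod}\ m)}}^{p-1}\frac1k\equiv\frac1m\Big(B_{p-1}\Big(\Big\{\frac rm\Big\}\Big)-B_{p-1}\Big(\Big\{\frac{r-p}m\Big\}\Big)\Big)\pmod p.$$
   Context: $\{x\}$ denotes the fractional part of a real number $x$; $B_n(x)$ is the $n$th Bernoulli polynomial. Congruences modulo $p$ are between rational numbers whose denominators are prime to $p$. *)

theory Defs
  imports Complex_Main "HOL-Number_Theory.Number_Theory"
begin

text \<open>Bernoulli numbers (convention B_1 = -1/2), via the standard recurrence
  sum_{k=0}^{n} (n+1 choose k) B_k = 0 for n >= 1, B_0 = 1.\<close>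
function bernoulli :: "nat \<Rightarrow> rat" where
  "bernoulli n = (if n = 0 then 1
     else - (\<Sum>k<n. of_nat ((n + 1) choose k) * bernoulli k) / of_nat (n + 1))"
  by auto
termination by (relation "measure id") auto

declare bernoulli.simps [simp del]

definition bernpoly :: "nat \<Rightarrow> rat \<Rightarrow> rat" where
  "bernpoly n x = (\<Sum>k\<le>n. of_nat (n choose k) * bernoulli k * x ^ (n - k))"

definition p_integral :: "nat \<Rightarrow> rat \<Rightarrow> bool" where
  "p_integral p q \<longleftrightarrow> coprime (snd (quotient_of q)) (int p)"

definition qcong :: "rat \<Rightarrow> rat \<Rightarrow> nat \<Rightarrow> bool" where
  "qcong a b p \<longleftrightarrow> p_integral p a \<and> p_integral p b \<and> p_integral p ((a - b) / of_nat p)"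

end

theory Submission
  imports Defs
begin

lemma pint_iff:
  "p_integral p q \<longleftrightarrow> (\<exists>a b. b \<noteq> 0 \<and> coprime b (int p) \<and> q = of_int a / of_int b)"
proof
  assume "p_integral p q"
  then show "\<exists>a b. b \<noteq> 0 \<and> coprime b (int p) \<and> q = of_int a / of_int b"
    unfolding p_integral_def
    by (metis less_irrefl prod.collapse quotient_of_denom_pos' quotient_of_div)
next
  assume "\<exists>a b. b \<noteq> 0 \<and> coprime b (int p) \<and> q = of_int a / of_int b"
  then obtain a b where ab: "b \<noteq> 0" "coprime b (int p)" "q = of_int a / of_int b" by blast
  obtain a' b' where qo: "quotient_of q = (a', b')" by (cases "quotient_of q")
  have b'pos: "b' > 0" using quotient_of_denom_pos[OF qo] .
  have cop: "coprime a' b'" using quotient_of_coprime[OF qo] .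
  have "q = of_int a' / of_int b'" using quotient_of_div[OF qo] .
  with ab b'pos have "of_int a' * of_int b = (of_int a * of_int b' :: rat)"
    by (simp add: field_simps)
  then have "a' * b = a * b'" by (metis of_int_eq_iff of_int_mult)
  then have "b' dvd a' * b" by simp
  with cop have "b' dvd b" by (metis coprime_commute coprime_dvd_mult_right_iff)
  with ab(2) have "coprime b' (int p)" using coprime_imp_coprime dvd_trans by blast
  then show "p_integral p q" unfolding p_integral_def qo by simp
qed

lemma pint_int[simp]: "p_integral p (of_int a)"
  unfolding pint_iff by (rule exI[of _ a], rule exI[of _ 1]) simp

lemma pint_nat[simp]: "p_integral p (of_nat a)"
  using pint_int[of p "int a"] by simp

lemma pint_one[simp]: "p_integral p 1"
  using pint_int[of p 1] by simp

lemma pint_zero[simp]: "p_integral p 0"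
  using pint_int[of p 0] by simp

lemma pint_add: assumes "p_integral p x" "p_integral p y" shows "p_integral p (x + y)"
proof -
  from assms obtain a b c d where h: "b \<noteq> 0" "coprime b (int p)" "x = of_int a / of_int b"
    "d \<noteq> 0" "coprime d (int p)" "y = of_int c / of_int d" unfolding pint_iff by blast
  then have "x + y = of_int (a*d + c*b) / of_int (b*d)" by (simp add: field_simps)
  moreover have "coprime (b*d) (int p)" using h by simp
  moreover have "b*d \<noteq> 0" using h by simp
  ultimately show ?thesis unfolding pint_iff by blast
qed

lemma pint_mult: assumes "p_integral p x" "p_integral p y" shows "p_integral p (x * y)"
proof -
  from assms obtain a b c d where h: "b \<noteq> 0" "coprime b (int p)" "x = of_int a / of_int b"
    "d \<noteq> 0" "coprime d (int p)" "y = of_int c / of_int d" unfolding pint_iff by blast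
  then have "x * y = of_int (a*c) / of_int (b*d)" by (simp add: field_simps)
  moreover have "coprime (b*d) (int p)" using h by simp
  moreover have "b*d \<noteq> 0" using h by simp
  ultimately show ?thesis unfolding pint_iff by blast
qed

lemma pint_uminus: assumes "p_integral p x" shows "p_integral p (- x)"
  using pint_mult[OF pint_int[of p "-1"] assms] by simp

lemma pint_diff: assumes "p_integral p x" "p_integral p y" shows "p_integral p (x - y)"
  using pint_add[OF assms(1) pint_uminus[OF assms(2)]] by simp

lemma pint_power: assumes "p_integral p x" shows "p_integral p (x ^ n)"
  by (induction n) (simp_all add: pint_mult assms)

lemma pint_sum: assumes "\<And>i. i \<in> A \<Longrightarrow> p_integral p (f i)" shows "p_integral p (sum f A)"
  using assms
proof (induction A rule: infinite_finite_induct)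
  case (infinite A) then show ?case using pint_int[of p 0] by simp
next
  case empty then show ?case using pint_int[of p 0] by simp
next
  case (insert x F) then show ?case by (simp add: pint_add)
qed

lemma pint_inv: assumes "coprime b (int p)" "b \<noteq> 0" shows "p_integral p (1 / of_int b)"
  unfolding pint_iff using assms by (intro exI[of _ 1] exI[of _ b]) simp

lemma pint_div: assumes "coprime b (int p)" "b \<noteq> 0" shows "p_integral p (of_int a / of_int b)"
  unfolding pint_iff using assms by blast

lemma qcong_refl: "p_integral p a \<Longrightarrow> qcong a a p"
  unfolding qcong_def using pint_int[of p 0] by simp

lemma qcong_trans: "qcong a b p \<Longrightarrow> qcong b c p \<Longrightarrow> qcong a c p"
  unfolding qcong_def
proof (elim conjE, intro conjI)
  assume "p_integral p ((a - b) / of_nat p)" "p_integral p ((b - c) / of_nat p)"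
  then have "p_integral p ((a - b) / of_nat p + (b - c) / of_nat p)" by (rule pint_add)
  then show "p_integral p ((a - c) / of_nat p)" by (simp add: diff_divide_distrib)
qed

lemma qcong_sym: "qcong a b p \<Longrightarrow> qcong b a p"
  unfolding qcong_def
proof (elim conjE, intro conjI)
  assume "p_integral p ((a - b) / of_nat p)"
  then have "p_integral p (- ((a - b) / of_nat p))" by (rule pint_uminus)
  then show "p_integral p ((b - a) / of_nat p)" by (simp add: minus_divide_left)
qed

lemma qcong_add: "qcong a b p \<Longrightarrow> qcong c d p \<Longrightarrow> qcong (a + c) (b + d) p"
  unfolding qcong_def
proof (elim conjE, intro conjI)
  assume "p_integral p ((a - b) / of_nat p)" "p_integral p ((c - d) / of_nat p)"
  then have "p_integral p ((a - b) / of_nat p + (c - d) / of_nat p)" by (rule pint_add)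
  moreover have "(a + c - (b + d)) / of_nat p = (a - b) / of_nat p + (c - d) / of_nat p"
    by (simp add: divide_inverse algebra_simps)
  ultimately show "p_integral p ((a + c - (b + d)) / of_nat p)" by simp
qed (auto intro: pint_add)

lemma qcong_diff: "qcong a b p \<Longrightarrow> qcong c d p \<Longrightarrow> qcong (a - c) (b - d) p"
  unfolding qcong_def
proof (elim conjE, intro conjI)
  assume "p_integral p ((a - b) / of_nat p)" "p_integral p ((c - d) / of_nat p)"
  then have "p_integral p ((a - b) / of_nat p - (c - d) / of_nat p)" by (rule pint_diff)
  moreover have "(a - c - (b - d)) / of_nat p = (a - b) / of_nat p - (c - d) / of_nat p"
    by (simp add: divide_inverse algebra_simps)
  ultimately show "p_integral p ((a - c - (b - d)) / of_nat p)" by simp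
qed (auto intro: pint_diff)

lemma qcong_mult: "qcong a b p \<Longrightarrow> qcong c d p \<Longrightarrow> qcong (a * c) (b * d) p"
  unfolding qcong_def
proof (elim conjE, intro conjI)
  assume h: "p_integral p a" "p_integral p d" "p_integral p ((a - b) / of_nat p)" "p_integral p ((c - d) / of_nat p)"
  then have "p_integral p (a * ((c - d) / of_nat p) + d * ((a - b) / of_nat p))"
    by (intro pint_add pint_mult)
  moreover have "(a * c - b * d) / of_nat p = a * ((c - d) / of_nat p) + d * ((a - b) / of_nat p)"
    by (simp add: divide_inverse algebra_simps)
  ultimately show "p_integral p ((a * c - b * d) / of_nat p)" by simp
qed (auto intro: pint_mult)

lemma qcong_power: "qcong a b p \<Longrightarrow> qcong (a ^ n) (b ^ n) p"
  by (induction n) (auto intro: qcong_mult qcong_refl)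

lemma qcong_sum: assumes "finite A" "\<And>i. i \<in> A \<Longrightarrow> qcong (f i) (g i) p"
  shows "qcong (sum f A) (sum g A) p"
  using assms
proof (induction A rule: finite_induct)
  case empty then show ?case using qcong_refl[OF pint_int[of p 0]] by simp
next
  case (insert x F) then show ?case by (simp add: qcong_add)
qed


lemma bernoulli_rec: "n > 0 \<Longrightarrow>
  (\<Sum>k<n. of_nat ((n + 1) choose k) * bernoulli k) + of_nat (n + 1) * bernoulli n = 0"
proof -
  assume "n > 0"
  then have "bernoulli n = - (\<Sum>k<n. of_nat ((n + 1) choose k) * bernoulli k) / of_nat (n + 1)"
    by (subst bernoulli.simps) simp
  then show ?thesis by (simp add: field_simps)
qed

lemma bern_sum: "(\<Sum>k\<le>N. of_nat (N choose k) * bernoulli k) = bernoulli N + (if N = 1 then 1 else 0)"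
proof (cases "N \<ge> 2")
  case True
  then obtain n where n: "N = Suc n" "n > 0" by (cases N) auto
  have "(\<Sum>k\<le>N. of_nat (N choose k) * bernoulli k)
      = (\<Sum>k<n. of_nat ((n+1) choose k) * bernoulli k) + of_nat (n + 1) * bernoulli n + bernoulli N"
    using n by (simp add: lessThan_Suc_atMost[symmetric])
  also have "\<dots> = bernoulli N" using bernoulli_rec[OF n(2)] by simp
  finally show ?thesis using n by simp
next
  case False
  then have "N = 0 \<or> N = 1" by auto
  then show ?thesis
  proof
    assume "N = 1" then show ?thesis by (simp add: bernoulli.simps[of 0])
  qed simp
qed

lemma pint_bernoulli: "prime p \<Longrightarrow> k + 1 < p \<Longrightarrow> p_integral p (bernoulli k)"
proof (induction k rule: less_induct)
  case (less k)
  show ?case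
  proof (cases "k = 0")
    case True then show ?thesis by (simp add: bernoulli.simps[of 0])
  next
    case False
    then have eq: "bernoulli k = (\<Sum>i<k. of_int (int ((k + 1) choose i)) * bernoulli i) * (- 1 / of_int (int (k + 1)))"
      by (subst bernoulli.simps) simp
    have cop: "coprime (int (k+1)) (int p)"
      using less.prems by (metis coprime_commute less_imp_le_nat not_less prime_nat_iff' zero_less_Suc Suc_eq_plus1 coprime_int_iff dvd_imp_le prime_imp_coprime)
    have "p_integral p (- 1 / of_int (int (k + 1)))"
      using pint_div[OF cop, of "-1"] by simp
    moreover have "p_integral p (\<Sum>i<k. of_int (int ((k + 1) choose i)) * bernoulli i)"
      using less by (intro pint_sum pint_mult pint_int) auto
    ultimately show ?thesis unfolding eq by (rule pint_mult[rotated])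
  qed
qed

lemma bernpoly_alt: "bernpoly n x = (\<Sum>i\<le>n. of_nat (n choose i) * bernoulli (n - i) * x ^ i)"
  unfolding bernpoly_def
  by (rule sum.reindex_bij_witness[where i="\<lambda>k. n - k" and j="\<lambda>k. n - k"])
     (auto simp: binomial_symmetric[symmetric])

lemma bernpoly_shift: "bernpoly n (x + 1) =
   (\<Sum>i\<le>n. of_nat (n choose i) * (\<Sum>k\<le>n - i. of_nat ((n - i) choose k) * bernoulli k) * x ^ i)"
proof -
  have "bernpoly n (x + 1) = (\<Sum>k\<le>n. \<Sum>i\<le>n. if k + i \<le> n then
          of_nat (n choose k) * bernoulli k * (of_nat ((n - k) choose i) * x ^ i) else 0)"
  proof -
    have "bernpoly n (x + 1) = (\<Sum>k\<le>n. of_nat (n choose k) * bernoulli k *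
             (\<Sum>i\<le>n-k. of_nat ((n - k) choose i) * x ^ i))"
      unfolding bernpoly_def by (simp add: binomial_ring)
    also have "\<dots> = (\<Sum>k\<le>n. \<Sum>i\<le>n. if k + i \<le> n then
          of_nat (n choose k) * bernoulli k * (of_nat ((n - k) choose i) * x ^ i) else 0)"
    proof (rule sum.cong[OF refl])
      fix k assume "k \<in> {..n}"
      have "{..n-k} = {..n} \<inter> {i. k + i \<le> n}" using \<open>k \<in> {..n}\<close> by auto
      then show "of_nat (n choose k) * bernoulli k * (\<Sum>i\<le>n-k. of_nat ((n - k) choose i) * x ^ i) =
        (\<Sum>i\<le>n. if k + i \<le> n then of_nat (n choose k) * bernoulli k * (of_nat ((n - k) choose i) * x ^ i) else 0)"
        by (simp add: sum_distrib_left sum.inter_restrict if_distrib cong: if_cong)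
    qed
    finally show ?thesis .
  qed
  also have "\<dots> = (\<Sum>i\<le>n. \<Sum>k\<le>n. if k + i \<le> n then
          of_nat (n choose k) * bernoulli k * (of_nat ((n - k) choose i) * x ^ i) else 0)"
    by (rule sum.swap)
  also have "\<dots> = (\<Sum>i\<le>n. of_nat (n choose i) * (\<Sum>k\<le>n - i. of_nat ((n - i) choose k) * bernoulli k) * x ^ i)"
  proof (rule sum.cong[OF refl])
    fix i assume "i \<in> {..n}"
    have s: "{..n-i} = {..n} \<inter> {k. k + i \<le> n}" using \<open>i \<in> {..n}\<close> by auto
    have c: "k + i \<le> n \<Longrightarrow> (n choose k) * ((n - k) choose i) = (n choose i) * ((n - i) choose k)" for k
    proof -
      assume h: "k + i \<le> n"
      have 1: "(n choose (n - i)) * ((n - i) choose k) = (n choose k) * ((n - k) choose (n - i - k))"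
        by (rule choose_mult) (use h in auto)
      have 2: "n choose (n - i) = n choose i" using binomial_symmetric[of i n] h by simp
      have 3: "(n - k) choose (n - i - k) = (n - k) choose i"
        using binomial_symmetric[of i "n - k"] h by (simp add: diff_diff_left add.commute)
      show ?thesis using 1 2 3 by (simp add: mult.commute)
    qed
    have "(\<Sum>k\<le>n. if k + i \<le> n then of_nat (n choose k) * bernoulli k * (of_nat ((n - k) choose i) * x ^ i) else 0)
        = (\<Sum>k\<le>n. if k + i \<le> n then of_nat (n choose i) * (of_nat ((n - i) choose k) * bernoulli k) * x ^ i else 0)"
    proof (rule sum.cong[OF refl])
      fix k
      show "(if k + i \<le> n then of_nat (n choose k) * bernoulli k * (of_nat ((n - k) choose i) * x ^ i) else 0) =
         (if k + i \<le> n then of_nat (n choose i) * (of_nat ((n - i) choose k) * bernoulli k) * x ^ i else 0)"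
      proof (cases "k + i \<le> n")
        case True
        have "(of_nat (n choose k) * of_nat ((n - k) choose i) :: rat) = of_nat (n choose i) * of_nat ((n - i) choose k)"
          using c[OF True] by (metis of_nat_mult)
        then show ?thesis using True by (simp add: algebra_simps)
      qed simp
    qed
    also have "\<dots> = (\<Sum>k\<le>n. if k \<in> {k. k + i \<le> n} then of_nat (n choose i) * (of_nat ((n - i) choose k) * bernoulli k) * x ^ i else 0)"
      by simp
    also have "\<dots> = (\<Sum>k\<in>{..n} \<inter> {k. k + i \<le> n}. of_nat (n choose i) * (of_nat ((n - i) choose k) * bernoulli k) * x ^ i)"
      by (rule sum.inter_restrict[symmetric]) simp
    also have "\<dots> = (\<Sum>k\<le>n - i. of_nat (n choose i) * (of_nat ((n - i) choose k) * bernoulli k) * x ^ i)"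
      unfolding s ..
    also have "\<dots> = of_nat (n choose i) * (\<Sum>k\<le>n - i. of_nat ((n - i) choose k) * bernoulli k) * x ^ i"
      by (simp add: sum_distrib_left sum_distrib_right)
    finally show "(\<Sum>k\<le>n. if k + i \<le> n then of_nat (n choose k) * bernoulli k * (of_nat ((n - k) choose i) * x ^ i) else 0) = \<dots>" .
  qed
  finally show ?thesis .
qed

lemma bernpoly_diff: assumes "n > 0" shows "bernpoly n (x + 1) - bernpoly n x = of_nat n * x ^ (n - 1)"
proof -
  have "bernpoly n (x + 1) - bernpoly n x = (\<Sum>i\<le>n. of_nat (n choose i) * (if n - i = 1 then 1 else 0) * x ^ i)"
    apply (subst bernpoly_shift)
    apply (subst bernpoly_alt[of n x])
    unfolding bern_sum sum_subtractf[symmetric]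
    by (rule sum.cong) (auto simp: algebra_simps)
  also have "\<dots> = (\<Sum>i\<le>n. if i = n - 1 then of_nat (n choose i) * x ^ i else 0)"
    by (rule sum.cong) (use assms in auto)
  also have "\<dots> = of_nat n * x ^ (n - 1)"
  proof -
    have "n choose (n - 1) = n choose (n - (n - 1))" using binomial_symmetric[of "n-1" n] by simp
    also have "n - (n - 1) = 1" using assms by simp
    finally have "n choose (n - 1) = n" by simp
    then show ?thesis by simp
  qed
  finally show ?thesis .
qed


lemma inv_cong:
  assumes p: "prime p" and k: "\<not> p dvd k"
  shows "qcong (1 / of_nat k) (of_nat k ^ (p - 2)) p"
proof -
  have k0: "k \<noteq> 0" using k by (metis dvd_0_right)
  have p2: "p \<ge> 2" using prime_ge_2_nat[OF p] .
  have "[k ^ (p - 1) = 1] (mod p)" using fermat_theorem[OF p k] .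
  moreover have "1 \<le> k ^ (p - 1)" using k0 by simp
  ultimately obtain q where q: "k ^ (p - 1) = q * p + 1" using cong_le_nat by blast
  have cop: "coprime (int k) (int p)"
  proof -
    have "coprime p k" by (rule prime_imp_coprime[OF p k])
    then show ?thesis by (simp add: ac_simps)
  qed
  have e: "(1 / of_nat k - of_nat k ^ (p - 2)) / of_nat p = (of_int (- int q) / of_int (int k) :: rat)"
  proof -
    have "(of_nat k :: rat) ^ (p - 2) * of_nat k = of_nat k ^ (p - 1)"
      using p2 by (metis Suc_diff_Suc Suc_1 diff_Suc_1 power_Suc2 less_le_trans one_less_numeral_iff semiring_norm(76))
    also have "\<dots> = of_nat q * of_nat p + 1" using q by (metis of_nat_1 of_nat_add of_nat_mult of_nat_power)
    finally have h: "(of_nat k :: rat) ^ (p - 2) * of_nat k = of_nat q * of_nat p + 1" .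
    have "1 / of_nat k - of_nat k ^ (p - 2) = (1 - of_nat k ^ (p - 2) * of_nat k) / (of_nat k :: rat)"
      using k0 by (simp add: field_simps)
    also have "\<dots> = - (of_nat q * of_nat p) / of_nat k" by (simp add: h)
    finally show ?thesis using p2 by simp
  qed
  have a1: "p_integral p (1 / of_nat k)" using pint_inv[OF cop] k0 by simp
  have a2: "p_integral p (of_nat k ^ (p - 2))" by (rule pint_power[OF pint_nat])
  have a3: "p_integral p (of_int (- int q) / of_int (int k))" by (rule pint_div[OF cop]) (use k0 in simp)
  show ?thesis unfolding qcong_def e using a1 a2 a3 by blast
qed

lemma div_step: "(m::int) > 0 \<Longrightarrow> (z - 1) div m = z div m - (if m dvd z then 1 else 0)"
proof -
  assume m: "m > 0"
  show ?thesis
  proof (cases "m dvd z")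
    case True
    then obtain q where z: "z = m * q" by blast
    have eq: "z - 1 = (m - 1) + (q - 1) * m" using z by (simp add: algebra_simps)
    have "(z - 1) div m = ((m - 1) + (q - 1) * m) div m" by (simp only: eq)
    also have "\<dots> = (q - 1) + (m - 1) div m" by (rule div_mult_self1) (use m in simp)
    finally have "(z - 1) div m = q - 1" using m by simp
    then show ?thesis using True z m by simp
  next
    case False
    have r: "z mod m > 0" using False m by (metis dvd_eq_mod_eq_0 le_less pos_mod_sign)
    have eq: "z - 1 = (z mod m - 1) + (z div m) * m" by (simp add: algebra_simps)
    have "(z - 1) div m = ((z mod m - 1) + (z div m) * m) div m" by (simp only: eq)
    also have "\<dots> = z div m + (z mod m - 1) div m" by (rule div_mult_self1) (use m in simp)
    finally have "(z - 1) div m = (z mod m - 1) div m + z div m" by simp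
    moreover have "z mod m < m" using m by simp
    then have "(z mod m - 1) div m = 0" using r by (intro div_pos_pos_trivial) auto
    ultimately have "(z - 1) div m = z div m" by simp
    then show ?thesis using False by simp
  qed
qed


definition tb :: "nat \<Rightarrow> rat \<Rightarrow> rat" where
  "tb n x = (\<Sum>k<n. of_nat (n choose k) * bernoulli k * x ^ (n - k))"

lemma bernpoly_tb: "bernpoly n x = tb n x + bernoulli n"
  unfolding bernpoly_def tb_def by (simp add: lessThan_Suc_atMost[symmetric])

lemma pint_tb: assumes "prime p" "n \<le> p - 1" "p_integral p x" shows "p_integral p (tb n x)"
  unfolding tb_def
proof (intro pint_sum pint_mult pint_nat pint_power assms(3))
  fix k assume "k \<in> {..<n}"
  then have "k + 1 < p" using assms(2) prime_ge_2_nat[OF assms(1)] by auto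
  then show "p_integral p (bernoulli k)" by (rule pint_bernoulli[OF assms(1)])
qed

lemma qcong_tb: assumes "prime p" "n \<le> p - 1" "qcong x y p" shows "qcong (tb n x) (tb n y) p"
  unfolding tb_def
proof (intro qcong_sum qcong_mult qcong_power assms(3) qcong_refl pint_nat finite_lessThan)
  fix k assume "k \<in> {..<n}"
  then have "k + 1 < p" using assms(2) prime_ge_2_nat[OF assms(1)] by auto
  then show "p_integral p (bernoulli k)" by (rule pint_bernoulli[OF assms(1)])
qed

lemma g_step:
  fixes m n t :: nat and r :: int
  assumes m: "m > 0" and n: "n > 0"
  shows "bernpoly n (of_int r / of_nat m - of_int \<lfloor>(of_int r - of_nat (Suc t)) / (of_nat m :: rat)\<rfloor>)
       - bernpoly n (of_int r / of_nat m - of_int \<lfloor>(of_int r - of_nat t) / (of_nat m :: rat)\<rfloor>)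
       = (if [int t = r] (mod int m) then of_nat n * (of_nat t / of_nat m) ^ (n - 1) else 0)"
proof -
  define z where "z = r - int t"
  have "(of_int r - of_nat (Suc t)) / of_nat m = (of_int (z - 1) / of_int (int m) :: rat)"
    unfolding z_def by simp
  then have f1: "\<lfloor>(of_int r - of_nat (Suc t)) / (of_nat m :: rat)\<rfloor> = (z - 1) div int m"
    by (simp only: floor_divide_of_int_eq)
  have "(of_int r - of_nat t) / of_nat m = (of_int z / of_int (int m) :: rat)"
    unfolding z_def by simp
  then have f0: "\<lfloor>(of_int r - of_nat t) / (of_nat m :: rat)\<rfloor> = z div int m"
    by (simp only: floor_divide_of_int_eq)
  have c: "[int t = r] (mod int m) \<longleftrightarrow> int m dvd z"
    unfolding z_def cong_iff_dvd_diff by (simp add: dvd_diff_commute)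
  have ds: "(z - 1) div int m = z div int m - (if int m dvd z then 1 else 0)"
    using div_step[of "int m" z] m by simp
  show ?thesis
  proof (cases "int m dvd z")
    case True
    then obtain q where q: "z = int m * q" by blast
    have zq: "z div int m = q" using q m by simp
    have a0: "of_int r / of_nat m - of_int q = (of_nat t / of_nat m :: rat)"
    proof -
      have "r = int t + int m * q" using q z_def by simp
      then have "(of_int r :: rat) = of_nat t + of_nat m * of_int q" by (metis of_int_add of_int_mult of_int_of_nat_eq)
      then show ?thesis using m by (simp add: field_simps)
    qed
    have a1: "of_int r / of_nat m - (of_int q - 1) = (of_nat t / of_nat m + 1 :: rat)"
      using a0 by simp
    have L: "(z - 1) div int m = q - 1" using ds True zq by simp
    have C: "[int t = r] (mod int m)" using c True by simp
    show ?thesis unfolding f0 f1 L zq if_P[OF C] of_int_diff of_int_1 a0 a1 by (rule bernpoly_diff[OF n])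
  next
    case False
    then show ?thesis unfolding f0 f1 ds using c by simp
  qed
qed


theorem theorem2p1:
  fixes p m :: nat and r :: int
  assumes "prime p" and "odd p" and "m > 0" and "\<not> p dvd m"
  shows "qcong (\<Sum>k\<in>{k\<in>{1..p-1}. [int k = r] (mod int m)}. 1 / of_nat k)
           ((1 / of_nat m) * (bernpoly (p - 1) (frac (of_int r / of_nat m))
                              - bernpoly (p - 1) (frac ((of_int r - of_nat p) / of_nat m)))) p"
proof -
  note p = assms(1) and m = assms(3) and pm = assms(4)
  have p2: "p \<ge> 2" using prime_ge_2_nat[OF p] .
  have p3: "p \<ge> 3" using p2 assms(2) by (cases "p = 2") auto
  have n0: "p - 1 > 0" using p3 by simp
  have n1: "p - 1 - 1 = p - 2" by simp
  define S where "S = {k\<in>{1..p-1}. [int k = r] (mod int m)}"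
  define g where "g t = bernpoly (p - 1) (of_int r / of_nat m - of_int \<lfloor>(of_int r - of_nat t) / (of_nat m :: rat)\<rfloor>)" for t
  define a where "a = frac (of_int r / of_nat m :: rat)"
  define b where "b = frac ((of_int r - of_nat p) / of_nat m :: rat)"
  have finS: "finite S" unfolding S_def by simp
  have copm: "coprime (int m) (int p)"
  proof -
    have "coprime p m" by (rule prime_imp_coprime[OF p pm])
    then show ?thesis by (simp add: ac_simps)
  qed
  have m0: "int m \<noteq> 0" using m by simp

  have tel: "g p - g 0 = (\<Sum>k\<in>S. of_nat (p - 1) * (of_nat k / of_nat m) ^ (p - 2))"
  proof -
    have "g p - g 0 = (\<Sum>t<p. g (Suc t) - g t)" by (rule sum_lessThan_telescope[symmetric])
    also have "\<dots> = (\<Sum>t<p. if [int t = r] (mod int m) then of_nat (p - 1) * (of_nat t / of_nat m) ^ (p - 2) else 0)"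
      unfolding g_def g_step[OF m n0] n1 by (rule refl)
    also have "\<dots> = (\<Sum>t\<in>{1..p-1}. if [int t = r] (mod int m) then of_nat (p - 1) * (of_nat t / of_nat m) ^ (p - 2) else 0)"
    proof -
      have "{..<p} = insert 0 {1..p-1}" using p2 by auto
      moreover have "(0::nat) \<notin> {1..p-1}" by simp
      moreover have "(0 :: rat) ^ (p - 2) = 0" using p3 by simp
      ultimately show ?thesis by simp
    qed
    also have "\<dots> = (\<Sum>k\<in>S. of_nat (p - 1) * (of_nat k / of_nat m) ^ (p - 2))"
      unfolding S_def by (rule sum.inter_filter[symmetric]) simp
    finally show ?thesis .
  qed
  have g0: "g 0 = bernpoly (p - 1) a" unfolding g_def a_def frac_def by simp
  have bp: "b + of_nat p / of_nat m = of_int r / of_nat m - of_int \<lfloor>(of_int r - of_nat p) / (of_nat m :: rat)\<rfloor>"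
    unfolding b_def frac_def using m by (simp add: field_simps)
  have gp: "g p = bernpoly (p - 1) (b + of_nat p / of_nat m)" unfolding g_def bp ..

  have sumeq: "(\<Sum>k\<in>S. (of_nat k :: rat) ^ (p - 2)) =
      of_nat m ^ (p - 2) * (1 / of_nat (p - 1)) * (tb (p - 1) (b + of_nat p / of_nat m) - tb (p - 1) a)"
  proof -
    have "(\<Sum>k\<in>S. (of_nat k :: rat) ^ (p - 2)) = of_nat m ^ (p - 2) * (\<Sum>k\<in>S. (of_nat k / of_nat m) ^ (p - 2))"
      unfolding sum_distrib_left using m by (intro sum.cong) (simp_all add: power_divide)
    also have "(\<Sum>k\<in>S. (of_nat k / of_nat m :: rat) ^ (p - 2)) = (1 / of_nat (p - 1)) * (g p - g 0)"
      unfolding tel sum_distrib_left[symmetric] using n0 by simp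
    also have "g p - g 0 = tb (p - 1) (b + of_nat p / of_nat m) - tb (p - 1) a"
      unfolding gp g0 bernpoly_tb by simp
    finally show ?thesis by (simp add: mult.assoc)
  qed
  have rhseq: "(1 / of_nat m) * (bernpoly (p - 1) a - bernpoly (p - 1) b)
      = (1 / of_nat m) * (- 1) * (tb (p - 1) b - tb (p - 1) a)"
    unfolding bernpoly_tb by (simp add: divide_inverse algebra_simps)

  have c1: "qcong (\<Sum>k\<in>S. 1 / of_nat k) (\<Sum>k\<in>S. (of_nat k :: rat) ^ (p - 2)) p"
  proof (rule qcong_sum[OF finS])
    fix k assume "k \<in> S"
    then have "1 \<le> k" "k < p" unfolding S_def using p2 by auto
    then have "\<not> p dvd k" by (auto dest: dvd_imp_le)
    then show "qcong (1 / of_nat k) (of_nat k ^ (p - 2)) p" by (rule inv_cong[OF p])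
  qed
  have c2: "qcong (of_nat m ^ (p - 2)) (1 / of_nat m) p" by (rule qcong_sym[OF inv_cong[OF p pm]])
  have c3: "qcong (1 / of_nat (p - 1)) (- 1) p"
  proof -
    have cop: "coprime (int (p - 1)) (int p)"
    proof -
      have "\<not> p dvd (p - 1)" using p2 by (auto dest: dvd_imp_le)
      then have "coprime p (p - 1)" by (rule prime_imp_coprime[OF p])
      then show ?thesis by (simp add: ac_simps)
    qed
    have nz: "int (p - 1) \<noteq> 0" using p2 by simp
    have i1: "p_integral p (1 / of_nat (p - 1))" using pint_inv[OF cop nz] by simp
    have "(1 / of_nat (p - 1) - (- 1)) / of_nat p = (1 / of_nat (p - 1) :: rat)"
    proof -
      have "(of_nat (p - 1) :: rat) = of_nat p - 1" using p2 by (simp add: of_nat_diff)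
      moreover have "(of_nat p :: rat) - 1 \<noteq> 0" using p2 by simp
      moreover have "(of_nat p :: rat) \<noteq> 0" using p2 by simp
      ultimately show ?thesis by (simp add: field_simps)
    qed
    then show ?thesis unfolding qcong_def using i1 pint_uminus[OF pint_one] by simp
  qed
  have pa: "p_integral p a"
  proof -
    have "a = of_int r / of_int (int m) - of_int \<lfloor>of_int r / (of_nat m :: rat)\<rfloor>"
      unfolding a_def frac_def by simp
    then show ?thesis using pint_diff[OF pint_div[OF copm m0] pint_int] by simp
  qed
  have pb: "p_integral p b"
  proof -
    have "b = of_int (r - int p) / of_int (int m) - of_int \<lfloor>(of_int r - of_nat p) / (of_nat m :: rat)\<rfloor>"
      unfolding b_def frac_def by simp
    then show ?thesis using pint_diff[OF pint_div[OF copm m0] pint_int, of "r - int p"] by (simp only:)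
  qed
  have cb: "qcong (b + of_nat p / of_nat m) b p"
  proof -
    have ppm: "p_integral p (of_nat p / of_nat m)" using pint_div[OF copm m0, of "int p"] by simp
    have "(b + of_nat p / of_nat m - b) / of_nat p = (1 / of_nat m :: rat)" using p2 m by simp
    moreover have "p_integral p (1 / of_nat m)" using pint_inv[OF copm m0] by simp
    ultimately show ?thesis unfolding qcong_def using pb ppm pint_add by simp
  qed
  have np: "p - 1 \<le> p - 1" by simp
  have c4: "qcong (tb (p - 1) (b + of_nat p / of_nat m) - tb (p - 1) a) (tb (p - 1) b - tb (p - 1) a) p"
    by (rule qcong_diff[OF qcong_tb[OF p np cb] qcong_refl[OF pint_tb[OF p np pa]]])
  have c5: "qcong (of_nat m ^ (p - 2) * (1 / of_nat (p - 1)) * (tb (p - 1) (b + of_nat p / of_nat m) - tb (p - 1) a))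
                  ((1 / of_nat m) * (- 1) * (tb (p - 1) b - tb (p - 1) a)) p"
    by (rule qcong_mult[OF qcong_mult[OF c2 c3] c4])
  have "qcong (\<Sum>k\<in>S. 1 / of_nat k) ((1 / of_nat m) * (bernpoly (p - 1) a - bernpoly (p - 1) b)) p"
    using qcong_trans[OF c1 c5[folded sumeq]] unfolding rhseq .
  then show ?thesis unfolding S_def a_def b_def .
qed

end
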